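(* Let $(\mu_n,M_n)_{n\in\mathbb{N}}$ be i.i.d. pairs under a probability measure $Q$, with $\mu_n>0$ and $M_n\ge0$, such that $E_Q[|\log\mu_1|^{\delta}]<\infty$ for every $0<\delta<6$, $E_Q[\log\mu_1]=0$, and $\liminf_{t\to\infty}\big(t^{\lambda}Q[\log M_1>t]\big)>0$ for some $0<\lambda<2$. Define $X_0:=0$ and $X_n:=\mu_nX_{n-1}+M_n$ for $n\in\mathbb{N}$. Then $Q$-a.s. $X_n>e^{\sqrt n}$ for all sufficiently large $n$; in fact $\sum_{n\ge1}Q[X_n\le e^{\sqrt n}]<\infty$. *)

theory Defs
  imports "HOL-Probability.Probability"
begin

fun Xrec :: "(nat \<Rightarrow> 'a \<Rightarrow> real) \<Rightarrow> (nat \<Rightarrow> 'a \<Rightarrow> real) \<Rightarrow> nat \<Rightarrow> 'a \<Rightarrow> real" where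
  "Xrec mu M 0 x = 0"
| "Xrec mu M (Suc n) x = mu (Suc n) x * Xrec mu M n x + M (Suc n) x"

end

theory Submission imports Defs "HOL-Real_Asymp.Real_Asymp" begin

lemma T2aux:
  fixes x C m aa :: real
  assumes x: "x \<ge> 2" and C: "0 \<le> C" and m: "m \<le> 2 * x powr aa"
  shows "m * (C / (x powr (aa/2)) powr 5) \<le> 2 * C * x powr (-(3/2*aa))"
proof -
  have xp: "x > 0" using x by simp
  have "(x powr (aa/2)) powr 5 = x powr (aa/2*5)" by (rule powr_powr)
  then have "C / (x powr (aa/2)) powr 5 = C * x powr (-(aa/2*5))"
    by (simp add: powr_minus_divide)
  moreover have "m * (C * x powr (-(aa/2*5))) \<le> 2 * x powr aa * (C * x powr (-(aa/2*5)))"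
    using m C by (intro mult_right_mono) auto
  moreover have "x powr aa * x powr (-(aa/2*5)) = x powr (-(3/2*aa))"
    using xp by (simp add: powr_add[symmetric])
  ultimately show ?thesis by (simp add: mult_ac)
qed
lemma T3aux:
  fixes x aa sg :: real and m :: nat
  assumes x: "x \<ge> 2" and sg: "0 \<le> sg" and m1: "real m \<le> x powr aa" and m: "real m + 1 \<le> 2 * x powr aa"
    and sn: "s * sqrt n = x powr (1/2 - aa/2)" and s: "s = x powr (-(aa/2))"
  shows "(real m + 1) * (exp (-s*(2 * sqrt n)) * (1 + s^2 * sg)^m) \<le> 2 * exp sg * (x powr aa * exp (-2 * x powr (1/2 - aa/2)))"
proof -
  have xp: "x > 0" using x by simp
  have e1: "exp (-s*(2 * sqrt n)) = exp (-2 * x powr (1/2 - aa/2))" using sn by (simp add: mult_ac)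
  have "(1 + s^2 * sg)^m \<le> exp (s^2 * sg)^m"
    using sg by (intro power_mono) (auto simp: add_nonneg_nonneg)
  also have "\<dots> = exp (real m * (s^2 * sg))" by (simp add: exp_of_nat_mult[symmetric])
  also have "\<dots> \<le> exp sg"
  proof -
    have "s^2 = x powr (-aa)" using xp by (simp add: s power2_eq_square powr_add[symmetric])
    then have "real m * s^2 \<le> x powr aa * x powr (-aa)" using m1 by (simp add: mult_right_mono)
    also have "\<dots> = 1" using xp by (simp add: powr_add[symmetric])
    finally have "real m * s^2 * sg \<le> 1 * sg" using sg by (intro mult_right_mono) auto
    then show ?thesis by (simp add: mult.assoc)
  qed
  finally have e2: "(1 + s^2 * sg)^m \<le> exp sg" .
  have "(real m + 1) * (exp (-s*(2 * sqrt n)) * (1 + s^2 * sg)^m) \<le> (2 * x powr aa) * (exp (-2 * x powr (1/2 - aa/2)) * exp sg)"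
  proof -
    have p0: "0 \<le> (1 + s^2 * sg)^m" using sg by simp
    show ?thesis unfolding e1 using m e2 p0 by (intro mult_mono mult_left_mono) auto
  qed
  then show ?thesis by (simp add: mult_ac)
qed

lemma sum_pm2: "summable (\<lambda>n::nat. norm (real n powr -2))"
proof -
  have "summable (\<lambda>n::nat. real n powr -2)" by (subst summable_real_powr_iff) simp
  then show ?thesis by simp
qed

lemma sum_exp1: "(c::real) > 0 \<Longrightarrow> (e::real) > 0 \<Longrightarrow> summable (\<lambda>n::nat. exp (- c * real n powr e))"
  by (rule summable_comparison_test_bigo[OF sum_pm2]) real_asymp

lemma sum_exp2: "(e::real) > 0 \<Longrightarrow> summable (\<lambda>n::nat. real n powr K * exp (-2 * real n powr e))"
  by (rule summable_comparison_test_bigo[OF sum_pm2]) real_asymp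
locale stp = prob_space Q for Q :: "'a measure" +
  fixes mu M :: "nat \<Rightarrow> 'a \<Rightarrow> real" and lam :: real
  assumes meas_mu: "\<And>n. n \<ge> 1 \<Longrightarrow> mu n \<in> borel_measurable Q"
    and meas_M: "\<And>n. n \<ge> 1 \<Longrightarrow> M n \<in> borel_measurable Q"
    and indep: "indep_vars (\<lambda>_. borel \<Otimes>\<^sub>M borel) (\<lambda>n x. (mu n x, M n x)) {1..}"
    and ident: "\<And>n. n \<ge> 1 \<Longrightarrow>
        distr Q (borel \<Otimes>\<^sub>M borel) (\<lambda>x. (mu n x, M n x)) = distr Q (borel \<Otimes>\<^sub>M borel) (\<lambda>x. (mu 1 x, M 1 x))"
    and mu_pos: "\<And>n x. n \<ge> 1 \<Longrightarrow> x \<in> space Q \<Longrightarrow> mu n x > 0"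
    and M_nonneg: "\<And>n x. n \<ge> 1 \<Longrightarrow> x \<in> space Q \<Longrightarrow> M n x \<ge> 0"
    and moments: "\<And>\<delta>::real. 0 < \<delta> \<Longrightarrow> \<delta> < 6 \<Longrightarrow> integrable Q (\<lambda>x. \<bar>ln (mu 1 x)\<bar> powr \<delta>)"
    and centered: "(\<integral>x. ln (mu 1 x) \<partial>Q) = 0"
    and lam: "0 < lam" "lam < 2"
    and tail: "Liminf at_top (\<lambda>t::real. ereal (t powr lam * measure Q {x \<in> space Q. ln (M 1 x) > t})) > 0"
begin

lemma Xrec_nonneg: "x \<in> space Q \<Longrightarrow> 0 \<le> Xrec mu M n x"
  by (induction n) (auto intro!: add_nonneg_nonneg mult_nonneg_nonneg less_imp_le[OF mu_pos] M_nonneg)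

lemma Xrec_lower:
  assumes "x \<in> space Q" "1 \<le> k" "k \<le> n"
  shows "(\<Prod>i\<in>{k<..n}. mu i x) * M k x \<le> Xrec mu M n x"
  using assms(3)
proof (induction n)
  case 0 then show ?case using assms by simp
next
  case (Suc n)
  show ?case
  proof (cases "k = Suc n")
    case True
    have "0 \<le> mu (Suc n) x * Xrec mu M n x"
      using Xrec_nonneg[OF assms(1)] mu_pos[OF _ assms(1), of "Suc n"] by simp
    then show ?thesis using True by simp
  next
    case False
    then have kn: "k \<le> n" using Suc.prems by simp
    have eq: "{k<..Suc n} = insert (Suc n) {k<..n}" using kn by auto
    have "(\<Prod>i\<in>{k<..Suc n}. mu i x) * M k x = mu (Suc n) x * ((\<Prod>i\<in>{k<..n}. mu i x) * M k x)"
      by (simp add: eq)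
    also have "\<dots> \<le> mu (Suc n) x * Xrec mu M n x"
      using Suc.IH[OF kn] mu_pos[OF _ assms(1), of "Suc n"] by (simp add: mult_left_mono)
    also have "\<dots> \<le> Xrec mu M (Suc n) x"
      using M_nonneg[OF _ assms(1), of "Suc n"] by simp
    finally show ?thesis .
  qed
qed

lemma Xrec_meas: "Xrec mu M n \<in> borel_measurable Q"
proof (induction n)
  case 0
  have "Xrec mu M 0 = (\<lambda>x. 0)" by (rule ext) simp
  then show ?case by simp
next
  case (Suc n)
  have "Xrec mu M (Suc n) = (\<lambda>x. mu (Suc n) x * Xrec mu M n x + M (Suc n) x)" by (rule ext) simp
  then show ?case using Suc meas_mu[of "Suc n"] meas_M[of "Suc n"] by simp
qed

lemma pair_meas: "i \<ge> 1 \<Longrightarrow> (\<lambda>x. (mu i x, M i x)) \<in> Q \<rightarrow>\<^sub>M borel \<Otimes>\<^sub>M borel"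
  using meas_mu meas_M by (auto intro!: measurable_Pair)

lemma integral_ident:
  fixes g :: "real \<times> real \<Rightarrow> real"
  assumes "i \<ge> 1" "g \<in> borel_measurable (borel \<Otimes>\<^sub>M borel)"
  shows "(\<integral>x. g (mu i x, M i x) \<partial>Q) = (\<integral>x. g (mu 1 x, M 1 x) \<partial>Q)"
  using integral_distr[OF pair_meas[OF assms(1)] assms(2), symmetric]
    integral_distr[OF pair_meas[of 1] assms(2)] ident[OF assms(1)] by simp

lemma integrable_ident:
  fixes g :: "real \<times> real \<Rightarrow> real"
  assumes "i \<ge> 1" "g \<in> borel_measurable (borel \<Otimes>\<^sub>M borel)"
  shows "integrable Q (\<lambda>x. g (mu i x, M i x)) \<longleftrightarrow> integrable Q (\<lambda>x. g (mu 1 x, M 1 x))"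
  using integrable_distr_eq[OF pair_meas[OF assms(1)] assms(2), symmetric]
    integrable_distr_eq[OF pair_meas[of 1] assms(2)] ident[OF assms(1)] by simp

lemma measure_ident:
  assumes "i \<ge> 1" and Pm: "Measurable.pred (borel \<Otimes>\<^sub>M borel) P"
  shows "measure Q {x\<in>space Q. P (mu i x, M i x)} = measure Q {x\<in>space Q. P (mu 1 x, M 1 x)}"
proof -
  have "{z. P z} \<in> sets (borel \<Otimes>\<^sub>M borel)" using Pm by (simp add: pred_def space_pair_measure)
  note assms = assms(1) this
  have "measure Q {x\<in>space Q. P (mu j x, M j x)} = measure (distr Q (borel \<Otimes>\<^sub>M borel) (\<lambda>x. (mu j x, M j x))) {z. P z}"
    if "j \<ge> 1" for j
    by (subst measure_distr[OF pair_meas[OF that] assms(2)]) (auto intro!: arg_cong[where f="measure Q"])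
  from this[of i] this[of 1] ident[OF assms(1)] assms(1) show ?thesis by simp
qed


lemma exp_quad: "(y::real) \<ge> -1 \<Longrightarrow> exp (-y) \<le> 1 - y + y^2"
proof -
  assume y: "y \<ge> -1"
  show ?thesis
  proof (cases "y \<le> 0")
    case True
    then show ?thesis using exp_bound[of "-y"] y by (simp add: power2_eq_square)
  next
    case False
    have pos: "0 < 1 + y" using False by simp
    have "1 + y \<le> exp y" by simp
    then have "inverse (exp y) \<le> inverse (1 + y)" using pos by (rule le_imp_inverse_le)
    then have "exp (-y) \<le> 1 / (1 + y)" by (simp add: exp_minus divide_inverse)
    also have "\<dots> \<le> 1 - y + y^2"
    proof -
      have "1 \<le> (1 - y + y^2) * (1 + y)" using False by (simp add: algebra_simps power2_eq_square power3_eq_cube)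
      then show ?thesis using pos by (simp add: divide_le_eq)
    qed
    finally show ?thesis .
  qed
qed

lemma abs_powr2: "\<bar>y::real\<bar> powr 2 = y^2"
  by (cases "y = 0") (simp_all add: powr_realpow)

definition "\<sigma>2 = (\<integral>x. (ln (mu 1 x))^2 \<partial>Q)"

lemma xi_meas: "i \<ge> 1 \<Longrightarrow> (\<lambda>x. ln (mu i x)) \<in> borel_measurable Q"
  using meas_mu by simp

lemma xi_int: "i \<ge> 1 \<Longrightarrow> integrable Q (\<lambda>x. ln (mu i x))"
proof -
  assume i: "i \<ge> 1"
  have "integrable Q (\<lambda>x. \<bar>ln (mu 1 x)\<bar>)" using moments[of 1] by simp
  then have "integrable Q (\<lambda>x. ln (mu 1 x))" using xi_meas[of 1] integrable_abs_iff by blast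
  then show ?thesis using integrable_ident[OF i, of "\<lambda>z. ln (fst z)"] by simp
qed

lemma xi_mean: "i \<ge> 1 \<Longrightarrow> (\<integral>x. ln (mu i x) \<partial>Q) = 0"
  using integral_ident[of i "\<lambda>z. ln (fst z)"] centered by simp

lemma xi2_int: "i \<ge> 1 \<Longrightarrow> integrable Q (\<lambda>x. (ln (mu i x))^2)"
proof -
  assume i: "i \<ge> 1"
  have "integrable Q (\<lambda>x. (ln (mu 1 x))^2)" using moments[of 2] by (simp add: abs_powr2)
  then show ?thesis using integrable_ident[OF i, of "\<lambda>z. (ln (fst z))^2"] by simp
qed

lemma xi2_mean: "i \<ge> 1 \<Longrightarrow> (\<integral>x. (ln (mu i x))^2 \<partial>Q) = \<sigma>2"
  using integral_ident[of i "\<lambda>z. (ln (fst z))^2"] by (simp add: \<sigma>2_def)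

lemma chernoff:
  assumes I: "finite I" "I \<subseteq> {1..}" and s: "0 < s" and B: "0 < B" "s * B \<le> 1"
  shows "measure Q {x\<in>space Q. (\<Sum>i\<in>I. max (ln (mu i x)) (-B)) \<le> -c} \<le> exp (-s*c) * (1 + s^2*\<sigma>2)^card I"
proof -
  define Y where "Y i x = exp (-s * max (ln (mu i x)) (-B))" for i x
  have indY: "indep_vars (\<lambda>_. borel) Y I"
  proof -
    have "indep_vars (\<lambda>_. borel) (\<lambda>i x. (\<lambda>z. exp (-s * max (ln (fst z)) (-B))) (mu i x, M i x)) {1..}"
      by (rule indep_vars_compose2[OF indep]) measurable
    then show ?thesis using I(2) unfolding Y_def by (auto intro: indep_vars_subset)
  qed
  have Ymeas: "i \<ge> 1 \<Longrightarrow> Y i \<in> borel_measurable Q" for i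
    unfolding Y_def using meas_mu[of i] by measurable
  have Ybd: "0 < Y i x" "Y i x \<le> exp (s*B)" for i x
  proof -
    have "s * max (ln (mu i x)) (-B) \<ge> s * (-B)" using s by (intro mult_left_mono) auto
    then show "0 < Y i x" "Y i x \<le> exp (s*B)" unfolding Y_def by auto
  qed
  have Yint: "i \<ge> 1 \<Longrightarrow> integrable Q (Y i)" for i
    by (rule integrable_const_bound[where B="exp (s*B)"]) (use Ybd Ymeas in \<open>auto simp: less_imp_le\<close>)
  have EY: "(\<integral>x. Y i x \<partial>Q) \<le> 1 + s^2 * \<sigma>2" if i: "i \<ge> 1" for i
  proof -
    define eta where "eta x = max (ln (mu i x)) (-B)" for x
    have eta_meas: "eta \<in> borel_measurable Q" unfolding eta_def using meas_mu[OF i] by measurable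
    have eta_int: "integrable Q eta"
      by (rule Bochner_Integration.integrable_bound[OF xi_int[OF i] eta_meas]) (use B in \<open>auto simp: eta_def max_def\<close>)
    have eta2_int: "integrable Q (\<lambda>x. (eta x)^2)"
    proof (rule Bochner_Integration.integrable_bound[OF xi2_int[OF i]])
      show "(\<lambda>x. (eta x)^2) \<in> borel_measurable Q" using eta_meas by measurable
      show "AE x in Q. norm ((eta x)^2) \<le> norm ((ln (mu i x))^2)"
      proof (intro AE_I2 impI)
        fix x
        have "\<bar>eta x\<bar> \<le> \<bar>ln (mu i x)\<bar>" using B by (auto simp: eta_def max_def)
        then show "norm ((eta x)^2) \<le> norm ((ln (mu i x))^2)"
          by (simp add: abs_le_square_iff)
      qed
    qed
    have "(\<integral>x. Y i x \<partial>Q) \<le> (\<integral>x. 1 - s * eta x + s^2 * (eta x)^2 \<partial>Q)"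
    proof (rule integral_mono)
      show "integrable Q (Y i)" using Yint[OF i] .
      show "integrable Q (\<lambda>x. 1 - s * eta x + s\<^sup>2 * (eta x)\<^sup>2)" using eta_int eta2_int by auto
      fix x
      have "s * eta x \<ge> s * (-B)" using s unfolding eta_def by (intro mult_left_mono) auto
      then have "s * eta x \<ge> -1" using B by simp
      then show "Y i x \<le> 1 - s * eta x + s\<^sup>2 * (eta x)\<^sup>2"
        using exp_quad[of "s * eta x"] unfolding Y_def eta_def by (simp add: power_mult_distrib)
    qed
    also have "\<dots> = 1 - s * (\<integral>x. eta x \<partial>Q) + s^2 * (\<integral>x. (eta x)^2 \<partial>Q)"
      using eta_int eta2_int by (simp add: prob_space)
    also have "\<dots> \<le> 1 + s^2 * \<sigma>2"
    proof -
      have "0 \<le> (\<integral>x. eta x \<partial>Q)"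
      proof -
        have "\<And>x. ln (mu i x) \<le> eta x" by (simp add: eta_def)
        then show ?thesis using integral_mono[OF xi_int[OF i] eta_int] xi_mean[OF i] by simp
      qed
      moreover have "(\<integral>x. (eta x)^2 \<partial>Q) \<le> \<sigma>2"
      proof -
        have "\<And>x. (eta x)^2 \<le> (ln (mu i x))^2"
        proof -
          fix x
          have "\<bar>eta x\<bar> \<le> \<bar>ln (mu i x)\<bar>" using B by (auto simp: eta_def max_def)
          then show "(eta x)^2 \<le> (ln (mu i x))^2" by (simp add: abs_le_square_iff)
        qed
        then show ?thesis using integral_mono[OF eta2_int xi2_int[OF i]] xi2_mean[OF i] by simp
      qed
      ultimately have "0 \<le> s * (\<integral>x. eta x \<partial>Q)" "s^2 * (\<integral>x. (eta x)^2 \<partial>Q) \<le> s^2 * \<sigma>2"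
        using s by (auto intro: mult_left_mono)
      then show ?thesis by linarith
    qed
    finally show ?thesis .
  qed
  define A where "A = {x\<in>space Q. (\<Sum>i\<in>I. max (ln (mu i x)) (-B)) \<le> -c}"
  have [measurable]: "(\<lambda>x. \<Sum>i\<in>I. max (ln (mu i x)) (-B)) \<in> borel_measurable Q"
    using I meas_mu by (intro borel_measurable_sum) auto
  have Asets: "A \<in> sets Q" unfolding A_def by measurable
  have intP: "integrable Q (\<lambda>x. \<Prod>i\<in>I. Y i x)"
    using indep_vars_integrable[OF I(1) indY] Yint I(2) by auto
  have "measure Q A = (\<integral>x. indicator A x \<partial>Q)" using Asets by simp
  also have "\<dots> \<le> (\<integral>x. exp (-s*c) * (\<Prod>i\<in>I. Y i x) \<partial>Q)"
  proof (rule integral_mono')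
    show "integrable Q (\<lambda>x. exp (-s*c) * (\<Prod>i\<in>I. Y i x))" using intP by simp
    fix x assume x: "x \<in> space Q"
    show "0 \<le> exp (-s*c) * (\<Prod>i\<in>I. Y i x)" using Ybd by (simp add: less_imp_le prod_nonneg)
    show "indicator A x \<le> exp (-s*c) * (\<Prod>i\<in>I. Y i x)"
    proof (cases "x \<in> A")
      case True
      have "(\<Prod>i\<in>I. Y i x) = exp (-s * (\<Sum>i\<in>I. max (ln (mu i x)) (-B)))"
      proof -
        have "(\<Prod>i\<in>I. Y i x) = exp (\<Sum>i\<in>I. -s * max (ln (mu i x)) (-B))"
          unfolding Y_def using I(1) by (simp add: exp_sum)
        also have "(\<Sum>i\<in>I. -s * max (ln (mu i x)) (-B)) = -s * (\<Sum>i\<in>I. max (ln (mu i x)) (-B))"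
          by (simp add: sum_distrib_left)
        finally show ?thesis .
      qed
      moreover have "-s * (\<Sum>i\<in>I. max (ln (mu i x)) (-B)) \<ge> s * c"
      proof -
        have "s * c \<le> s * (- (\<Sum>i\<in>I. max (ln (mu i x)) (-B)))"
          using True s unfolding A_def by (intro mult_left_mono) auto
        then show ?thesis by simp
      qed
      ultimately have "exp (s*c) \<le> (\<Prod>i\<in>I. Y i x)" by simp
      then have "1 \<le> exp (-s*c) * (\<Prod>i\<in>I. Y i x)"
      proof -
        have "exp (-s*c) * exp (s*c) = 1" by (simp add: exp_add[symmetric])
        then show ?thesis using mult_left_mono[OF \<open>exp (s*c) \<le> _\<close>, of "exp (-s*c)"] by simp
      qed
      then show ?thesis using True by simp
    qed (use \<open>0 \<le> exp (-s*c) * (\<Prod>i\<in>I. Y i x)\<close> in simp)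
  qed
  also have "\<dots> = exp (-s*c) * (\<Prod>i\<in>I. \<integral>x. Y i x \<partial>Q)"
    using indep_vars_lebesgue_integral[OF I(1) indY] Yint I(2) by auto
  also have "\<dots> \<le> exp (-s*c) * (\<Prod>i\<in>I. 1 + s^2*\<sigma>2)"
  proof (intro mult_left_mono prod_mono conjI)
    fix i assume "i \<in> I"
    then show "0 \<le> (\<integral>x. Y i x \<partial>Q)" using Ybd by (intro integral_nonneg_AE AE_I2) (simp add: less_imp_le)
    show "(\<integral>x. Y i x \<partial>Q) \<le> 1 + s^2*\<sigma>2" using EY \<open>i \<in> I\<close> I(2) by auto
  qed simp
  finally show ?thesis unfolding A_def by simp
qed


definition "qt t = measure Q {x\<in>space Q. ln (M 1 x) > t}"

lemma nogood:
  assumes I: "finite I" "I \<noteq> {}" "I \<subseteq> {1..}"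
  shows "measure Q {x\<in>space Q. \<forall>k\<in>I. ln (M k x) \<le> t} \<le> exp (- qt t * card I)"
proof -
  define E where "E k = {x\<in>space Q. ln (snd (mu k x, M k x)) \<le> t}" for k
  have ind: "indep_events E I"
    unfolding E_def
    by (rule indep_eventsI_indep_vars[OF indep_vars_subset[OF indep I(3)], where P="\<lambda>k z. ln (snd z) \<le> t"]) measurable
  have "measure Q (\<Inter>k\<in>I. E k) = (\<Prod>k\<in>I. measure Q (E k))"
    using ind I unfolding indep_events_def by auto
  moreover have "(\<Inter>k\<in>I. E k) = {x\<in>space Q. \<forall>k\<in>I. ln (M k x) \<le> t}"
    using I(2) by (auto simp: E_def)
  moreover have "measure Q (E k) = 1 - qt t" if k: "k \<in> I" for k
  proof -
    have k1: "k \<ge> 1" using k I(3) by auto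
    have [measurable]: "M k \<in> borel_measurable Q" using meas_M[OF k1] .
    have "E k = space Q - {x\<in>space Q. ln (M k x) > t}" by (auto simp: E_def)
    then have "measure Q (E k) = 1 - measure Q {x\<in>space Q. ln (M k x) > t}"
      by (simp add: prob_compl)
    also have "measure Q {x\<in>space Q. ln (M k x) > t} = qt t"
      using measure_ident[OF k1, of "\<lambda>z. ln (snd z) > t"] unfolding qt_def by simp measurable
    finally show ?thesis .
  qed
  ultimately have "measure Q {x\<in>space Q. \<forall>k\<in>I. ln (M k x) \<le> t} = (1 - qt t) ^ card I"
    by simp
  also have "\<dots> \<le> (exp (- qt t)) ^ card I"
  proof (rule power_mono)
    show "1 - qt t \<le> exp (- qt t)" using exp_ge_add_one_self[of "- qt t"] by simp
    show "0 \<le> 1 - qt t" unfolding qt_def by simp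
  qed
  also have "\<dots> = exp (- qt t * card I)" by (simp add: exp_of_nat_mult[symmetric] mult.commute)
  finally show ?thesis .
qed

definition "C5 = (\<integral>x. \<bar>ln (mu 1 x)\<bar> powr 5 \<partial>Q)"

lemma bigneg:
  assumes I: "finite I" "I \<subseteq> {1..}" and B: "0 < B"
  shows "measure Q {x\<in>space Q. \<exists>i\<in>I. ln (mu i x) < -B} \<le> card I * (C5 / B powr 5)"
proof -
  have "{x\<in>space Q. \<exists>i\<in>I. ln (mu i x) < -B} = (\<Union>i\<in>I. {x\<in>space Q. ln (mu i x) < -B})" by auto
  moreover have "measure Q (\<Union>i\<in>I. {x\<in>space Q. ln (mu i x) < -B}) \<le> (\<Sum>i\<in>I. measure Q {x\<in>space Q. ln (mu i x) < -B})"
    using I meas_mu by (intro finite_measure_subadditive_finite) auto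
  moreover have "measure Q {x\<in>space Q. ln (mu i x) < -B} \<le> C5 / B powr 5" if i: "i \<in> I" for i
  proof -
    have i1: "i \<ge> 1" using i I by auto
    have "measure Q {x\<in>space Q. ln (mu i x) < -B} = measure Q {x\<in>space Q. ln (mu 1 x) < -B}"
      using measure_ident[OF i1, of "\<lambda>z. ln (fst z) < -B"] by simp measurable
    also have "\<dots> \<le> measure Q {x\<in>space Q. \<bar>ln (mu 1 x)\<bar> powr 5 \<ge> B powr 5}"
      using meas_mu[of 1] B by (intro finite_measure_mono) (auto intro!: powr_mono2)
    also have "\<dots> \<le> C5 / B powr 5"
      unfolding C5_def using moments[of 5] meas_mu[of 1] B
      by (intro integral_Markov_inequality_measure[where A="space Q"]) auto
    finally show ?thesis .
  qed
  ultimately show ?thesis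
    by (smt (verit, ccfv_SIG) sum_bounded_above)
qed


lemma sigma2_nonneg: "0 \<le> \<sigma>2"
  unfolding \<sigma>2_def by (intro integral_nonneg_AE AE_I2) simp

lemma sets_xi: "i \<ge> 1 \<Longrightarrow> {x\<in>space Q. P (ln (mu i x))} \<in> sets Q" if "Measurable.pred borel P"
  using meas_mu[of i] that by measurable

lemma sets_L: "i \<ge> 1 \<Longrightarrow> {x\<in>space Q. P (ln (M i x))} \<in> sets Q" if "Measurable.pred borel P"
  using meas_M[of i] that by measurable

lemma sets_W: "finite J \<Longrightarrow> J \<subseteq> {1..} \<Longrightarrow> {x\<in>space Q. (\<Sum>i\<in>J. max (ln (mu i x)) (-B)) \<le> c} \<in> sets Q"
proof -
  assume J: "finite J" "J \<subseteq> {1..}"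
  have [measurable]: "(\<lambda>x. \<Sum>i\<in>J. max (ln (mu i x)) (-B)) \<in> borel_measurable Q"
    using J meas_mu by (intro borel_measurable_sum) auto
  show ?thesis by measurable
qed

lemma key_incl:
  assumes x: "x \<in> space Q" and n: "1 \<le> n - m" "m < n"
    and X: "Xrec mu M n x \<le> exp (sqrt n)"
    and k: "k \<in> {n-m..n}" "ln (M k x) > 3 * sqrt n"
    and nb: "\<forall>i\<in>{n-m..n}. \<not> ln (mu i x) < -B"
  shows "(\<Sum>i\<in>{k<..n}. max (ln (mu i x)) (-B)) \<le> - (2 * sqrt n)"
proof -
  have k1: "1 \<le> k" "k \<le> n" using k n by auto
  have "0 \<le> 3 * sqrt n" by simp
  then have "M k x \<noteq> 0" using k(2) by (metis ln_0 not_less)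
  then have Mpos: "M k x > 0" using M_nonneg[OF k1(1) x] by simp
  have prod: "(\<Prod>i\<in>{k<..n}. mu i x) = exp (\<Sum>i\<in>{k<..n}. ln (mu i x))"
    by (simp add: exp_sum) (intro prod.cong refl, use mu_pos[OF _ x] k1 in auto)
  have "exp ((\<Sum>i\<in>{k<..n}. ln (mu i x)) + ln (M k x)) = (\<Prod>i\<in>{k<..n}. mu i x) * M k x"
    using Mpos by (simp add: exp_add prod)
  also have "\<dots> \<le> exp (sqrt n)" using Xrec_lower[OF x k1] X by simp
  finally have "(\<Sum>i\<in>{k<..n}. ln (mu i x)) + ln (M k x) \<le> sqrt n" by simp
  then have "(\<Sum>i\<in>{k<..n}. ln (mu i x)) \<le> - (2 * sqrt n)" using k(2) by simp
  moreover have "(\<Sum>i\<in>{k<..n}. max (ln (mu i x)) (-B)) = (\<Sum>i\<in>{k<..n}. ln (mu i x))"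
  proof (intro sum.cong refl)
    fix i assume "i \<in> {k<..n}"
    then have "i \<in> {n-m..n}" using k(1) by auto
    then have "\<not> ln (mu i x) < -B" using nb by blast
    then show "max (ln (mu i x)) (-B) = ln (mu i x)" by (simp add: max_def)
  qed
  ultimately show ?thesis by simp
qed

lemma step_bound:
  assumes n: "1 \<le> n - m" "m < n" and B: "0 < B" and s: "0 < s" "s * B \<le> 1"
  shows "measure Q {x\<in>space Q. Xrec mu M n x \<le> exp (sqrt n)}
    \<le> exp (- qt (3 * sqrt n) * (m+1)) + (m+1) * (C5 / B powr 5) + (m+1) * (exp (-s*(2 * sqrt n)) * (1 + s^2*\<sigma>2)^m)"
proof -
  define I where "I = {n-m..n}"
  have I: "finite I" "I \<noteq> {}" "I \<subseteq> {1..}" "card I = m + 1" using n by (auto simp: I_def)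
  define N where "N = {x\<in>space Q. \<forall>k\<in>I. ln (M k x) \<le> 3 * sqrt n}"
  define E where "E = {x\<in>space Q. \<exists>i\<in>I. ln (mu i x) < -B}"
  define W where "W k = {x\<in>space Q. (\<Sum>i\<in>{k<..n}. max (ln (mu i x)) (-B)) \<le> - (2 * sqrt n)}" for k
  have Nsets: "N \<in> sets Q"
  proof -
    have "N = (\<Inter>k\<in>I. {x\<in>space Q. ln (M k x) \<le> 3 * sqrt n})" using I(2) by (auto simp: N_def)
    moreover have "{x\<in>space Q. ln (M k x) \<le> 3 * sqrt n} \<in> sets Q" if "k \<in> I" for k
      using that I(3) by (intro sets_L) auto
    ultimately show ?thesis using I by auto
  qed
  have Esets: "E \<in> sets Q"
  proof -
    have "E = (\<Union>k\<in>I. {x\<in>space Q. ln (mu k x) < -B})" by (auto simp: E_def)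
    moreover have "{x\<in>space Q. ln (mu k x) < -B} \<in> sets Q" if "k \<in> I" for k
      using that I(3) by (intro sets_xi) auto
    ultimately show ?thesis using I by auto
  qed
  have Wsets: "W k \<in> sets Q" if "k \<in> I" for k
    unfolding W_def using that I(3) by (intro sets_W) auto
  have UWsets: "(\<Union>k\<in>I. W k) \<in> sets Q" using Wsets I by auto
  have incl: "{x\<in>space Q. Xrec mu M n x \<le> exp (sqrt n)} \<subseteq> N \<union> E \<union> (\<Union>k\<in>I. W k)"
  proof
    fix x assume "x \<in> {x\<in>space Q. Xrec mu M n x \<le> exp (sqrt n)}"
    then have x: "x \<in> space Q" and X: "Xrec mu M n x \<le> exp (sqrt n)" by auto
    show "x \<in> N \<union> E \<union> (\<Union>k\<in>I. W k)"
    proof (cases "x \<in> N \<or> x \<in> E")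
      case False
      then obtain k where k: "k \<in> I" "ln (M k x) > 3 * sqrt n" using x by (auto simp: N_def not_le)
      have nb: "\<forall>i\<in>{n-m..n}. \<not> ln (mu i x) < -B" using False x by (auto simp: E_def I_def)
      have "x \<in> W k" using key_incl[OF x n X k(1)[unfolded I_def] k(2) nb] x by (simp add: W_def)
      then show ?thesis using k(1) by blast
    qed auto
  qed
  have "measure Q {x\<in>space Q. Xrec mu M n x \<le> exp (sqrt n)} \<le> measure Q (N \<union> E \<union> (\<Union>k\<in>I. W k))"
    using incl Nsets Esets UWsets by (intro finite_measure_mono) auto
  also have "\<dots> \<le> measure Q N + measure Q E + measure Q (\<Union>k\<in>I. W k)"
    using measure_Un_le[OF sets.Un[OF Nsets Esets] UWsets] measure_Un_le[OF Nsets Esets] by linarith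
  also have "\<dots> \<le> exp (- qt (3 * sqrt n) * (m+1)) + (m+1) * (C5 / B powr 5) + (m+1) * (exp (-s*(2 * sqrt n)) * (1 + s^2*\<sigma>2)^m)"
  proof -
    have "measure Q N \<le> exp (- qt (3 * sqrt n) * (m+1))"
      using nogood[OF I(1-3)] I(4) by (simp add: N_def)
    moreover have "measure Q E \<le> (m+1) * (C5 / B powr 5)"
      using bigneg[OF I(1,3) B] I(4) by (simp add: E_def)
    moreover have "measure Q (\<Union>k\<in>I. W k) \<le> (m+1) * (exp (-s*(2 * sqrt n)) * (1 + s^2*\<sigma>2)^m)"
    proof -
      have "measure Q (\<Union>k\<in>I. W k) \<le> (\<Sum>k\<in>I. measure Q (W k))"
        using Wsets I by (intro finite_measure_subadditive_finite) auto
      also have "\<dots> \<le> (\<Sum>k\<in>I. exp (-s*(2 * sqrt n)) * (1 + s^2*\<sigma>2)^m)"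
      proof (rule sum_mono)
        fix k assume k: "k \<in> I"
        have sub: "{k<..n} \<subseteq> {1..}" using k I(3) by auto
        have "measure Q (W k) \<le> exp (-s*(2 * sqrt n)) * (1 + s^2*\<sigma>2)^card {k<..n}"
          unfolding W_def by (rule chernoff[OF _ sub s(1) B s(2)]) simp
        also have "\<dots> \<le> exp (-s*(2 * sqrt n)) * (1 + s^2*\<sigma>2)^m"
          using k sigma2_nonneg by (intro mult_left_mono power_increasing) (auto simp: I_def)
        finally show "measure Q (W k) \<le> exp (-s*(2 * sqrt n)) * (1 + s^2*\<sigma>2)^m" .
      qed
      also have "\<dots> = (m+1) * (exp (-s*(2 * sqrt n)) * (1 + s^2*\<sigma>2)^m)" using I(4) by simp
      finally show ?thesis .
    qed
    ultimately show ?thesis by linarith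
  qed
  finally show ?thesis by (simp add: add.commute)
qed


definition "aa = (5 + lam) / 7"

lemma aa_props: "5/7 < aa" "aa < 1" "0 < aa - lam/2" "0 < 1/2 - aa/2"
  using lam unfolding aa_def by auto

lemma tail_c: "\<exists>c>0. \<forall>\<^sub>F n in sequentially. qt (3 * sqrt (real n)) \<ge> c * (3 * sqrt (real n)) powr (-lam)"
proof -
  have "Liminf at_top (\<lambda>t::real. ereal (t powr lam * qt t)) > 0" using tail unfolding qt_def .
  then obtain c :: real where c: "0 < ereal c" "ereal c < Liminf at_top (\<lambda>t::real. ereal (t powr lam * qt t))"
    using ereal_dense2 by blast
  have ev: "\<forall>\<^sub>F t in at_top. ereal c < ereal (t powr lam * qt t)" using less_LiminfD[OF c(2)] .
  have lim: "filterlim (\<lambda>n::nat. 3 * sqrt (real n)) at_top sequentially" by real_asymp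
  have ev2: "\<forall>\<^sub>F n in sequentially. ereal c < ereal ((3 * sqrt (real n)) powr lam * qt (3 * sqrt (real n)))"
    using filterlim_iff[THEN iffD1, OF lim, rule_format, OF ev] by simp
  have ev3: "\<forall>\<^sub>F n in sequentially. n \<ge> 1" by (simp add: eventually_ge_at_top)
  have "\<forall>\<^sub>F n in sequentially. qt (3 * sqrt (real n)) \<ge> c * (3 * sqrt (real n)) powr (-lam)"
    using ev2 ev3
  proof eventually_elim
    case (elim n)
    define t where "t = 3 * sqrt (real n)"
    have tpos: "t > 0" using elim(2) by (simp add: t_def)
    have "c < t powr lam * qt t" using elim(1) by (simp add: t_def)
    then have "c * t powr (-lam) < (t powr lam * qt t) * t powr (-lam)"
      using tpos by (intro mult_strict_right_mono) auto
    also have "\<dots> = qt t" using tpos by (simp add: powr_minus field_simps)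
    finally show ?case by (simp add: t_def)
  qed
  then show ?thesis using c(1) by auto
qed

lemma ev_bound:
  obtains c3 where "c3 > 0" "\<forall>\<^sub>F n in sequentially.
    measure Q {x\<in>space Q. Xrec mu M n x \<le> exp (sqrt n)} \<le>
      exp (- c3 * real n powr (aa - lam/2)) + 2 * C5 * real n powr (-(3/2*aa))
      + 2 * exp \<sigma>2 * (real n powr aa * exp (-2 * real n powr (1/2 - aa/2)))"
proof -
  obtain c where c: "c > 0" "\<forall>\<^sub>F n in sequentially. qt (3 * sqrt (real n)) \<ge> c * (3 * sqrt (real n)) powr (-lam)"
    using tail_c by blast
  define c3 where "c3 = c * 3 powr (-lam)"
  have c3: "c3 > 0" using c(1) by (simp add: c3_def)
  have C5: "0 \<le> C5" unfolding C5_def by (intro integral_nonneg_AE AE_I2) simp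
  have "\<forall>\<^sub>F n in sequentially.
    measure Q {x\<in>space Q. Xrec mu M n x \<le> exp (sqrt n)} \<le>
      exp (- c3 * real n powr (aa - lam/2)) + 2 * C5 * real n powr (-(3/2*aa))
      + 2 * exp \<sigma>2 * (real n powr aa * exp (-2 * real n powr (1/2 - aa/2)))"
    using c(2) eventually_ge_at_top[of "2::nat"]
  proof eventually_elim
    case (elim n)
    define x where "x = real n"
    have x: "x \<ge> 2" using elim(2) by (simp add: x_def)
    define m where "m = nat \<lfloor>x powr aa\<rfloor>"
    have xa1: "1 \<le> x powr aa" using x aa_props by (simp add: ge_one_powr_ge_zero)
    have xalt: "x powr aa < x" using x aa_props powr_less_mono[of aa 1 x] by simp
    have m1: "real m \<le> x powr aa" using xa1 by (simp add: m_def)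
    have m2: "x powr aa \<le> real m + 1" using xa1 by (simp add: m_def)
    have mn: "m < n" using m1 xalt by (simp add: x_def)
    define B where "B = x powr (aa/2)"
    define s where "s = x powr (-(aa/2))"
    have B: "0 < B" using x by (simp add: B_def)
    have s: "0 < s" "s * B \<le> 1" using x by (simp_all add: s_def B_def powr_add[symmetric])
    have n1: "1 \<le> n - m" using mn by simp
    note main = step_bound[OF n1 mn B s]
    have T1: "exp (- qt (3 * sqrt n) * (real m + 1)) \<le> exp (- c3 * x powr (aa - lam/2))"
    proof -
      have "(3 * sqrt x) powr (-lam) = 3 powr (-lam) * x powr (-lam/2)"
        using x by (simp add: powr_mult powr_half_sqrt[symmetric] powr_powr)
      then have "qt (3 * sqrt n) \<ge> c3 * x powr (-lam/2)" using elim(1) by (simp add: x_def c3_def mult.assoc)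
      moreover have "0 \<le> c3 * x powr (-lam/2)" using c3 by simp
      ultimately have "qt (3 * sqrt n) * (real m + 1) \<ge> c3 * x powr (-lam/2) * x powr aa"
        using m2 by (intro mult_mono) auto
      also have "c3 * x powr (-lam/2) * x powr aa = c3 * x powr (aa - lam/2)"
        using x by (simp add: mult.assoc powr_add[symmetric])
      finally show ?thesis by simp
    qed
    have m3: "real m + 1 \<le> 2 * x powr aa" using m1 xa1 by simp
    have T2: "(real m + 1) * (C5 / B powr 5) \<le> 2 * C5 * x powr (-(3/2*aa))"
      unfolding B_def using T2aux[OF x C5 m3] .
    have sn: "s * sqrt n = x powr (1/2 - aa/2)"
      using x by (simp add: s_def x_def powr_half_sqrt[symmetric] powr_add[symmetric])
    have T3: "(real m + 1) * (exp (-s*(2 * sqrt n)) * (1 + s^2*\<sigma>2)^m) \<le> 2 * exp \<sigma>2 * (x powr aa * exp (-2 * x powr (1/2 - aa/2)))"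
      using T3aux[OF x sigma2_nonneg m1 m3 sn s_def] .
    have "measure Q {x\<in>space Q. Xrec mu M n x \<le> exp (sqrt n)} \<le> exp (- c3 * x powr (aa - lam/2)) + 2 * C5 * x powr (-(3/2*aa)) + 2 * exp \<sigma>2 * (x powr aa * exp (-2 * x powr (1/2 - aa/2)))"
      using main T1 T2 T3 by linarith
    then show ?case by (simp add: x_def)
  qed
  then show ?thesis using that c3 by blast
qed


theorem final:
  "(AE x in Q. \<forall>\<^sub>F n in sequentially. Xrec mu M n x > exp (sqrt (real n)))
   \<and> summable (\<lambda>n. measure Q {x \<in> space Q. Xrec mu M (Suc n) x \<le> exp (sqrt (real (Suc n)))})"
proof -
  obtain c3 where c3: "c3 > 0" and ev: "\<forall>\<^sub>F n in sequentially.
    measure Q {x\<in>space Q. Xrec mu M n x \<le> exp (sqrt n)} \<le>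
      exp (- c3 * real n powr (aa - lam/2)) + 2 * C5 * real n powr (-(3/2*aa))
      + 2 * exp \<sigma>2 * (real n powr aa * exp (-2 * real n powr (1/2 - aa/2)))"
    using ev_bound by blast
  define g where "g n = exp (- c3 * real n powr (aa - lam/2)) + 2 * C5 * real n powr (-(3/2*aa))
      + 2 * exp \<sigma>2 * (real n powr aa * exp (-2 * real n powr (1/2 - aa/2)))" for n
  have sg: "summable g"
  proof -
    have 1: "summable (\<lambda>n::nat. exp (- c3 * real n powr (aa - lam/2)))"
      using sum_exp1[OF c3] aa_props by simp
    have 2: "summable (\<lambda>n::nat. real n powr (-(3/2*aa)))"
      using aa_props by (simp add: summable_real_powr_iff)
    have 3: "summable (\<lambda>n::nat. real n powr aa * exp (-2 * real n powr (1/2 - aa/2)))"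
      using sum_exp2 aa_props by simp
    show ?thesis unfolding g_def
      by (intro summable_add summable_mult 1 2 3)
  qed
  define A where "A n = {x\<in>space Q. Xrec mu M (Suc n) x \<le> exp (sqrt (real (Suc n)))}" for n
  have Asets: "A n \<in> sets Q" for n
    unfolding A_def using Xrec_meas[of "Suc n"] by measurable
  obtain N where N: "\<And>n. n \<ge> N \<Longrightarrow> measure Q {x\<in>space Q. Xrec mu M n x \<le> exp (sqrt n)} \<le> g n"
    using ev unfolding g_def eventually_sequentially by blast
  have sumA: "summable (\<lambda>n. measure Q (A n))"
  proof (rule summable_comparison_test')
    show "summable (\<lambda>n. g (Suc n))" using sg by (simp add: summable_Suc_iff)
    fix n assume "n \<ge> N"
    then show "norm (measure Q (A n)) \<le> g (Suc n)" using N[of "Suc n"] by (simp add: A_def)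
  qed
  have "AE x in Q. \<forall>\<^sub>F n in sequentially. x \<in> space Q - A n"
    using Asets sumA by (intro borel_cantelli_AE1) (auto simp: less_top[symmetric])
  then have "AE x in Q. \<forall>\<^sub>F n in sequentially. Xrec mu M n x > exp (sqrt (real n))"
  proof (rule AE_mp, intro AE_I2 impI)
    fix x assume x: "x \<in> space Q" and ev: "\<forall>\<^sub>F n in sequentially. x \<in> space Q - A n"
    have "\<forall>\<^sub>F n in sequentially. Xrec mu M (Suc n) x > exp (sqrt (real (Suc n)))"
      using ev by eventually_elim (auto simp: A_def not_le)
    then show "\<forall>\<^sub>F n in sequentially. Xrec mu M n x > exp (sqrt (real n))"
      by (rule eventually_sequentially_Suc[THEN iffD1])
  qed
  then show ?thesis using sumA unfolding A_def by simp
qed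

end

theorem mainTheorem6:
  fixes Q :: "'a measure" and mu M :: "nat \<Rightarrow> 'a \<Rightarrow> real" and lam :: real
  assumes "prob_space Q"
    and meas_mu: "\<And>n. n \<ge> 1 \<Longrightarrow> mu n \<in> borel_measurable Q"
    and meas_M: "\<And>n. n \<ge> 1 \<Longrightarrow> M n \<in> borel_measurable Q"
    and indep: "prob_space.indep_vars Q (\<lambda>_. borel \<Otimes>\<^sub>M borel) (\<lambda>n x. (mu n x, M n x)) {1..}"
    and ident: "\<And>n. n \<ge> 1 \<Longrightarrow>
        distr Q (borel \<Otimes>\<^sub>M borel) (\<lambda>x. (mu n x, M n x)) = distr Q (borel \<Otimes>\<^sub>M borel) (\<lambda>x. (mu 1 x, M 1 x))"
    and mu_pos: "\<And>n x. n \<ge> 1 \<Longrightarrow> x \<in> space Q \<Longrightarrow> mu n x > 0"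
    and M_nonneg: "\<And>n x. n \<ge> 1 \<Longrightarrow> x \<in> space Q \<Longrightarrow> M n x \<ge> 0"
    and moments: "\<And>\<delta>::real. 0 < \<delta> \<Longrightarrow> \<delta> < 6 \<Longrightarrow> integrable Q (\<lambda>x. \<bar>ln (mu 1 x)\<bar> powr \<delta>)"
    and centered: "(\<integral>x. ln (mu 1 x) \<partial>Q) = 0"
    and lam: "0 < lam" "lam < 2"
    and tail: "Liminf at_top (\<lambda>t::real. ereal (t powr lam * measure Q {x \<in> space Q. ln (M 1 x) > t})) > 0"
  shows "(AE x in Q. \<forall>\<^sub>F n in sequentially. Xrec mu M n x > exp (sqrt (real n)))
         \<and> summable (\<lambda>n. measure Q {x \<in> space Q. Xrec mu M (Suc n) x \<le> exp (sqrt (real (Suc n)))})"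
proof -
  have "stp Q mu M lam"
    unfolding stp_def stp_axioms_def using assms by blast
  then interpret stp Q mu M lam .
  show ?thesis by (rule final)
qed

end
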